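(* Let $k\le n$ be a positive integer. Suppose $f:2^E\times O^E\to\mathbb{R}_{\ge0}$ is worst-case monotone and worst-case submodular with respect to $p(\phi)$ and satisfies minimal dependency. Let $\pi^g$ be the adaptive worst-case greedy policy for cardinality $k$, and let $\pi^*_{wc}$ maximize $f_{wc}(\pi)$ over all policies $\pi$ with $|E(\pi,\phi)|\le k$ for all $\phi\in U^+$. Then $f_{wc}(\pi^g)\ge(1-1/e)\,f_{wc}(\pi^*_{wc})$.
   Context: Setting. $E$ is a finite set of $n$ items and $O$ a finite set of states. A realization is a function $\phi:E\to O$; $p$ is a probability distribution (prior) on the set of all realizations, $\Phi$ denotes a random realization with law $p$, and $U^+=\{\phi: p(\phi)>0\}$. A partial realization is a function $\psi:S\to O$ with $S\subseteq E$, $\mathrm{dom}(\psi)=S$; it is identified with the set of pairs $\{(e,\psi(e)):e\in S\}$, so $\psi\subseteq\psi'$ means $\mathrm{dom}(\psi)\subseteq\mathrm{dom}(\psi')$ and they agree on $\mathrm{dom}(\psi)$. A realization $\phi$ is consistent with $\psi$, written $\phi\sim\psi$, if it agrees with $\psi$ on $\mathrm{dom}(\psi)$. Only partial realizations with $\Pr[\Phi\sim\psi]>0$ are considered, and $p(\phi\mid\psi)=\Pr[\Phi=\phi\mid\Phi\sim\psi]$. For $S\subseteq E$ and a partial realization $\psi$, $f(S,\psi)=\mathbb{E}[f(S,\Phi)\mid\Phi\sim\psi]$. For $e\notin\mathrm{dom}(\psi)$, let $O(e,\psi)=\{o\in O:\exists\phi\text{ with }p(\phi\mid\psi)>0,\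 \phi(e)=o\}$ and define the worst-case marginal utility $f_{wc}(e\mid\psi)=\min_{o\in O(e,\psi)}\{f(\mathrm{dom}(\psi)\cup\{e\},\psi\cup\{(e,o)\})-f(\mathrm{dom}(\psi),\psi)\}$. $f$ is worst-case submodular if $f_{wc}(e\mid\psi)\ge f_{wc}(e\mid\psi')$ for all partial realizations $\psi\subseteq\psi'$ and all $e\in E\setminus\mathrm{dom}(\psi')$; it is worst-case monotone if $f_{wc}(e\mid\psi)\ge0$ for all $\psi$ and $e\notin\mathrm{dom}(\psi)$. $f$ satisfies minimal dependency if $f(\mathrm{dom}(\psi),\psi)=f(\mathrm{dom}(\psi),\phi)$ for every partial realization $\psi$ and every $\phi\in U^+$ with $\phi\sim\psi$. Policies. A (deterministic) policy $\pi$ is a rule which, given the current observation (the partial realization of the items selected so far), either selects a new item or stops; after an item $e$ is selected under realization $\phi$, the state $\phi(e)$ is observed. $E(\pi,\phi)$ is the set of items selected by $\pi$ under $\phi$. The worst-case utility is $f_{wc}(\pi)=\min_{\phi\in U^+}f(E(\pi,\phi),\phi)$. Adaptive worst-case greedy policy for cardinality $k$, $\pi^g$: start with $\psi_0=\emptyset$; for $t=1,\dots,k$ select $e_t\in\arg\max_{e\in E\setminus\mathrm{dom}(\psi_{t-1})}f_{wc}(e\mid\psi_{t-1})$ (ties broken arbitrarily), observe $\Phi(e_t)$, and set $\psi_t=\psi_{t-1}\cup\{(e_t,\Phi(e_t))\}$. *)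

theory Defs
  imports Complex_Main
begin

text \<open>Partial realizations are maps 'e \<rightharpoonup> 'o; realizations are total functions 'e \<Rightarrow> 'o.
  The ground set E is the (finite) universe of type 'e, the state set O the universe of 'o.\<close>

definition consistent :: "('e \<Rightarrow> 'o) \<Rightarrow> ('e \<rightharpoonup> 'o) \<Rightarrow> bool" where
  "consistent \<phi> \<psi> \<longleftrightarrow> (\<forall>e\<in>dom \<psi>. \<psi> e = Some (\<phi> e))"

definition prob_cons :: "(('e \<Rightarrow> 'o) \<Rightarrow> real) \<Rightarrow> ('e \<rightharpoonup> 'o) \<Rightarrow> real" where
  "prob_cons p \<psi> = sum p {\<phi>. consistent \<phi> \<psi>}"

definition cond_f :: "('e set \<Rightarrow> ('e \<Rightarrow> 'o) \<Rightarrow> real) \<Rightarrow> (('e \<Rightarrow> 'o) \<Rightarrow> real)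
    \<Rightarrow> 'e set \<Rightarrow> ('e \<rightharpoonup> 'o) \<Rightarrow> real" where
  "cond_f f p S \<psi> = (\<Sum>\<phi>\<in>{\<phi>. consistent \<phi> \<psi>}. p \<phi> * f S \<phi>) / prob_cons p \<psi>"

text \<open>O(e,psi): states of e possible given psi (p(phi|psi) > 0 iff phi ~ psi and p phi > 0).\<close>
definition obs_states :: "(('e \<Rightarrow> 'o) \<Rightarrow> real) \<Rightarrow> ('e \<rightharpoonup> 'o) \<Rightarrow> 'e \<Rightarrow> 'o set" where
  "obs_states p \<psi> e = {\<phi> e | \<phi>. consistent \<phi> \<psi> \<and> p \<phi> > 0}"

definition fwc_marg :: "('e set \<Rightarrow> ('e \<Rightarrow> 'o) \<Rightarrow> real) \<Rightarrow> (('e \<Rightarrow> 'o) \<Rightarrow> real)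
    \<Rightarrow> 'e \<Rightarrow> ('e \<rightharpoonup> 'o) \<Rightarrow> real" where
  "fwc_marg f p e \<psi> = Min ((\<lambda>st. cond_f f p (insert e (dom \<psi>)) (\<psi>(e \<mapsto> st)) - cond_f f p (dom \<psi>) \<psi>)
       ` obs_states p \<psi> e)"

definition wc_submodular :: "('e set \<Rightarrow> ('e \<Rightarrow> 'o) \<Rightarrow> real) \<Rightarrow> (('e \<Rightarrow> 'o) \<Rightarrow> real) \<Rightarrow> bool" where
  "wc_submodular f p \<longleftrightarrow> (\<forall>\<psi> \<psi>' e. prob_cons p \<psi> > 0 \<and> prob_cons p \<psi>' > 0 \<and> \<psi> \<subseteq>\<^sub>m \<psi>'
      \<and> e \<notin> dom \<psi>' \<longrightarrow> fwc_marg f p e \<psi> \<ge> fwc_marg f p e \<psi>')"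

definition wc_monotone :: "('e set \<Rightarrow> ('e \<Rightarrow> 'o) \<Rightarrow> real) \<Rightarrow> (('e \<Rightarrow> 'o) \<Rightarrow> real) \<Rightarrow> bool" where
  "wc_monotone f p \<longleftrightarrow> (\<forall>\<psi> e. prob_cons p \<psi> > 0 \<and> e \<notin> dom \<psi> \<longrightarrow> fwc_marg f p e \<psi> \<ge> 0)"

definition minimal_dependency :: "('e set \<Rightarrow> ('e \<Rightarrow> 'o) \<Rightarrow> real) \<Rightarrow> (('e \<Rightarrow> 'o) \<Rightarrow> real) \<Rightarrow> bool" where
  "minimal_dependency f p \<longleftrightarrow> (\<forall>\<psi> \<phi>. prob_cons p \<psi> > 0 \<and> p \<phi> > 0 \<and> consistent \<phi> \<psi>
      \<longrightarrow> cond_f f p (dom \<psi>) \<psi> = f (dom \<psi>) \<phi>)"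

text \<open>A deterministic policy maps the current observation to the next item (Some e) or stops (None).
  Selecting an already selected item is treated as stopping.\<close>
type_synonym ('e, 'o) policy = "('e \<rightharpoonup> 'o) \<Rightarrow> 'e option"

fun run :: "('e, 'o) policy \<Rightarrow> ('e \<Rightarrow> 'o) \<Rightarrow> nat \<Rightarrow> ('e \<rightharpoonup> 'o) \<Rightarrow> ('e \<rightharpoonup> 'o)" where
  "run \<pi> \<phi> 0 \<psi> = \<psi>"
| "run \<pi> \<phi> (Suc m) \<psi> = (case \<pi> \<psi> of None \<Rightarrow> \<psi>
     | Some e \<Rightarrow> if e \<in> dom \<psi> then \<psi> else run \<pi> \<phi> m (\<psi>(e \<mapsto> \<phi> e)))"

text \<open>E(pi,phi): every step adds a new item, so CARD('e) steps exhaust the run.\<close>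
definition selected :: "('e::finite, 'o) policy \<Rightarrow> ('e \<Rightarrow> 'o) \<Rightarrow> 'e set" where
  "selected \<pi> \<phi> = dom (run \<pi> \<phi> (card (UNIV :: 'e set)) Map.empty)"

definition fwc_policy :: "('e::finite set \<Rightarrow> ('e \<Rightarrow> 'o) \<Rightarrow> real) \<Rightarrow> (('e \<Rightarrow> 'o) \<Rightarrow> real)
    \<Rightarrow> ('e, 'o) policy \<Rightarrow> real" where
  "fwc_policy f p \<pi> = Min ((\<lambda>\<phi>. f (selected \<pi> \<phi>) \<phi>) ` {\<phi>. p \<phi> > 0})"

definition is_wc_greedy :: "('e set \<Rightarrow> ('e \<Rightarrow> 'o) \<Rightarrow> real) \<Rightarrow> (('e \<Rightarrow> 'o) \<Rightarrow> real) \<Rightarrow> nat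
    \<Rightarrow> ('e, 'o) policy \<Rightarrow> bool" where
  "is_wc_greedy f p k \<pi> \<longleftrightarrow> (\<forall>\<psi>. prob_cons p \<psi> > 0 \<longrightarrow>
     (if card (dom \<psi>) < k
      then (\<exists>e. \<pi> \<psi> = Some e \<and> e \<notin> dom \<psi> \<and>
              (\<forall>e'. e' \<notin> dom \<psi> \<longrightarrow> fwc_marg f p e' \<psi> \<le> fwc_marg f p e \<psi>))
      else \<pi> \<psi> = None))"

end

theory Submission
  imports Defs
begin

definition res :: "('e \<Rightarrow> 'o) \<Rightarrow> 'e set \<Rightarrow> ('e \<rightharpoonup> 'o)" where
  "res \<phi> S = (\<lambda>e. if e \<in> S then Some (\<phi> e) else None)"

lemma dom_res[simp]: "dom (res \<phi> S) = S"
  unfolding res_def dom_def by auto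

lemma cons_res[simp]: "consistent \<phi> (res \<phi> S)"
  unfolding res_def consistent_def dom_def by (auto split: if_splits)

lemma cons_upd: "consistent \<phi> \<psi> \<Longrightarrow> consistent \<phi> (\<psi>(e \<mapsto> \<phi> e))"
  by (auto simp: consistent_def)

lemma cons_upd_D: "consistent \<phi> (\<psi>(e \<mapsto> x)) \<Longrightarrow> e \<notin> dom \<psi> \<Longrightarrow> consistent \<phi> \<psi> \<and> \<phi> e = x"
  by (auto simp: consistent_def split: if_splits)

definition step :: "('e, 'o) policy \<Rightarrow> ('e \<Rightarrow> 'o) \<Rightarrow> ('e \<rightharpoonup> 'o) \<Rightarrow> ('e \<rightharpoonup> 'o)" where
  "step \<pi> \<phi> \<chi> = (case \<pi> \<chi> of None \<Rightarrow> \<chi>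
     | Some e \<Rightarrow> if e \<in> dom \<chi> then \<chi> else \<chi>(e \<mapsto> \<phi> e))"

lemma run_Suc_back: "run \<pi> \<phi> (Suc t) \<psi> = step \<pi> \<phi> (run \<pi> \<phi> t \<psi>)"
proof (induction t arbitrary: \<psi>)
  case 0
  then show ?case by (auto simp: step_def split: option.splits)
next
  case (Suc t)
  show ?case
  proof (cases "\<pi> \<psi>")
    case None
    then show ?thesis by (simp add: step_def)
  next
    case (Some e)
    show ?thesis
    proof (cases "e \<in> dom \<psi>")
      case True
      then show ?thesis using Some by (simp add: step_def)
    next
      case False
      have "run \<pi> \<phi> (Suc (Suc t)) \<psi> = run \<pi> \<phi> (Suc t) (\<psi>(e \<mapsto> \<phi> e))"
        using Some False by simp
      also have "\<dots> = step \<pi> \<phi> (run \<pi> \<phi> t (\<psi>(e \<mapsto> \<phi> e)))" by (rule Suc)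
      also have "run \<pi> \<phi> t (\<psi>(e \<mapsto> \<phi> e)) = run \<pi> \<phi> (Suc t) \<psi>" using Some False by simp
      finally show ?thesis .
    qed
  qed
qed

context
  fixes p :: "('e::finite \<Rightarrow> 'o::finite) \<Rightarrow> real"
    and f :: "'e set \<Rightarrow> ('e \<Rightarrow> 'o) \<Rightarrow> real"
  assumes p_nonneg: "\<forall>\<phi>. p \<phi> \<ge> 0"
    and mono: "wc_monotone f p"
    and submod: "wc_submodular f p"
    and mindep: "minimal_dependency f p"
begin

lemma pos_iff: "prob_cons p \<psi> > 0 \<longleftrightarrow> (\<exists>\<phi>. p \<phi> > 0 \<and> consistent \<phi> \<psi>)"
proof
  assume a: "prob_cons p \<psi> > 0"
  show "\<exists>\<phi>. p \<phi> > 0 \<and> consistent \<phi> \<psi>"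
  proof (rule ccontr)
    assume "\<not> ?thesis"
    hence "\<forall>\<phi>\<in>{\<phi>. consistent \<phi> \<psi>}. p \<phi> \<le> 0" by (auto simp: not_less)
    hence "prob_cons p \<psi> \<le> 0" unfolding prob_cons_def by (intro sum_nonpos) blast
    with a show False by simp
  qed
next
  assume "\<exists>\<phi>. p \<phi> > 0 \<and> consistent \<phi> \<psi>"
  then obtain \<phi> where "p \<phi> > 0" "consistent \<phi> \<psi>" by blast
  moreover have "p \<phi> \<le> prob_cons p \<psi>" unfolding prob_cons_def
    using calculation p_nonneg by (intro member_le_sum) auto
  ultimately show "prob_cons p \<psi> > 0" by simp
qed

lemma cond_eq: "p \<phi> > 0 \<Longrightarrow> consistent \<phi> \<psi> \<Longrightarrow> cond_f f p (dom \<psi>) \<psi> = f (dom \<psi>) \<phi>"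
  using mindep pos_iff unfolding minimal_dependency_def by blast

lemma marg_le:
  assumes "p \<phi> > 0" "consistent \<phi> \<psi>" "e \<notin> dom \<psi>"
  shows "fwc_marg f p e \<psi> \<le> f (insert e (dom \<psi>)) \<phi> - f (dom \<psi>) \<phi>"
proof -
  have "\<phi> e \<in> obs_states p \<psi> e" unfolding obs_states_def using assms by blast
  hence "fwc_marg f p e \<psi> \<le> cond_f f p (insert e (dom \<psi>)) (\<psi>(e\<mapsto>\<phi> e)) - cond_f f p (dom \<psi>) \<psi>"
    unfolding fwc_marg_def by (intro Min_le) auto
  also have "cond_f f p (insert e (dom \<psi>)) (\<psi>(e\<mapsto>\<phi> e)) = f (insert e (dom \<psi>)) \<phi>"
    using cond_eq[of \<phi> "\<psi>(e\<mapsto>\<phi> e)"] cons_upd[OF assms(2)] assms by simp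
  also have "cond_f f p (dom \<psi>) \<psi> = f (dom \<psi>) \<phi>" using cond_eq assms by simp
  finally show ?thesis .
qed

lemma marg_nonneg: "p \<phi> > 0 \<Longrightarrow> consistent \<phi> \<psi> \<Longrightarrow> e \<notin> dom \<psi> \<Longrightarrow> fwc_marg f p e \<psi> \<ge> 0"
  using mono pos_iff unfolding wc_monotone_def by blast

lemma f_mono_aux:
  assumes "p \<phi> > 0"
  shows "finite D \<Longrightarrow> S \<inter> D = {} \<Longrightarrow> f S \<phi> \<le> f (S \<union> D) \<phi>"
proof (induction D rule: finite_induct)
  case empty
  then show ?case by simp
next
  case (insert e D)
  hence "f S \<phi> \<le> f (S \<union> D) \<phi>" by auto
  also have "f (S \<union> D) \<phi> \<le> f (insert e (S \<union> D)) \<phi>"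
    using marg_le[of \<phi> "res \<phi> (S \<union> D)" e] marg_nonneg[of \<phi> "res \<phi> (S \<union> D)" e] assms insert
    by auto
  finally show ?case by simp
qed

lemma f_mono: "p \<phi> > 0 \<Longrightarrow> S \<subseteq> T \<Longrightarrow> f S \<phi> \<le> f T \<phi>"
  using f_mono_aux[of \<phi> "T - S" S] by (simp add: Un_absorb1)

lemma marg_attain:
  assumes "prob_cons p \<psi> > 0" "e \<notin> dom \<psi>"
  shows "\<exists>\<phi>1. p \<phi>1 > 0 \<and> consistent \<phi>1 \<psi> \<and>
           fwc_marg f p e \<psi> = f (insert e (dom \<psi>)) \<phi>1 - f (dom \<psi>) \<phi>1"
proof -
  have ne: "obs_states p \<psi> e \<noteq> {}" using assms pos_iff unfolding obs_states_def by auto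
  have "fwc_marg f p e \<psi> \<in> (\<lambda>st. cond_f f p (insert e (dom \<psi>)) (\<psi>(e \<mapsto> st)) - cond_f f p (dom \<psi>) \<psi>)
       ` obs_states p \<psi> e" unfolding fwc_marg_def using ne by (intro Min_in) auto
  then obtain st where st: "st \<in> obs_states p \<psi> e"
    and eq: "fwc_marg f p e \<psi> = cond_f f p (insert e (dom \<psi>)) (\<psi>(e \<mapsto> st)) - cond_f f p (dom \<psi>) \<psi>"
    by blast
  from st obtain \<phi>1 where ph: "consistent \<phi>1 \<psi>" "p \<phi>1 > 0" "\<phi>1 e = st"
    unfolding obs_states_def by blast
  have "cond_f f p (insert e (dom \<psi>)) (\<psi>(e \<mapsto> st)) = f (insert e (dom \<psi>)) \<phi>1"
    using cond_eq[of \<phi>1 "\<psi>(e\<mapsto>\<phi>1 e)"] cons_upd[OF ph(1), of e] ph by simp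
  moreover have "cond_f f p (dom \<psi>) \<psi> = f (dom \<psi>) \<phi>1" using cond_eq ph by simp
  ultimately show ?thesis using eq ph by auto
qed


lemma adv:
  assumes B0: "B \<ge> 0" and Bb: "\<forall>e. e \<notin> dom \<psi> \<longrightarrow> fwc_marg f p e \<psi> \<le> B"
  shows "p \<phi>0 > 0 \<Longrightarrow> consistent \<phi>0 \<chi> \<Longrightarrow> consistent \<phi>0 \<psi> \<Longrightarrow>
    \<exists>\<phi>. p \<phi> > 0 \<and> consistent \<phi> \<chi> \<and> consistent \<phi> \<psi> \<and>
      f (dom (run \<pi> \<phi> m \<chi>)) \<phi> \<le> f (dom \<chi> \<union> dom \<psi>) \<phi>0
        + (real (card (dom (run \<pi> \<phi> m \<chi>))) - real (card (dom \<chi>))) * B"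
proof (induction m arbitrary: \<chi> \<phi>0)
  case 0
  then show ?case using f_mono[of \<phi>0 "dom \<chi>" "dom \<chi> \<union> dom \<psi>"] by auto
next
  case (Suc m)
  have base: "f (dom \<chi>) \<phi>0 \<le> f (dom \<chi> \<union> dom \<psi>) \<phi>0"
    using f_mono[of \<phi>0 "dom \<chi>" "dom \<chi> \<union> dom \<psi>"] Suc.prems by auto
  show ?case
  proof (cases "\<pi> \<chi>")
    case None
    then show ?thesis using Suc.prems base by (intro exI[of _ \<phi>0]) auto
  next
    case (Some e)
    show ?thesis
    proof (cases "e \<in> dom \<chi>")
      case True
      then show ?thesis using Some Suc.prems base by (intro exI[of _ \<phi>0]) auto
    next
      case eN: False
      show ?thesis
      proof (cases "e \<in> dom \<psi>")
        case True
        define \<chi>' where "\<chi>' = \<chi>(e \<mapsto> \<phi>0 e)"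
        have c': "consistent \<phi>0 \<chi>'" unfolding \<chi>'_def by (rule cons_upd[OF Suc.prems(2)])
        obtain \<phi> where ph: "p \<phi> > 0" "consistent \<phi> \<chi>'" "consistent \<phi> \<psi>"
          and bd: "f (dom (run \<pi> \<phi> m \<chi>')) \<phi> \<le> f (dom \<chi>' \<union> dom \<psi>) \<phi>0
            + (real (card (dom (run \<pi> \<phi> m \<chi>'))) - real (card (dom \<chi>'))) * B"
          using Suc.IH[OF Suc.prems(1) c' Suc.prems(3)] by (elim exE conjE) (rule that)
        have pe: "\<phi> e = \<phi>0 e" using ph(3) Suc.prems(3) True unfolding consistent_def by force
        have cc: "consistent \<phi> \<chi>" using cons_upd_D[of \<phi> \<chi> e] ph(2) eN unfolding \<chi>'_def by blast
        have r: "run \<pi> \<phi> (Suc m) \<chi> = run \<pi> \<phi> m \<chi>'" using Some eN pe by (simp add: \<chi>'_def)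
        have d: "dom \<chi>' \<union> dom \<psi> = dom \<chi> \<union> dom \<psi>" using True by (auto simp: \<chi>'_def)
        have cd: "card (dom \<chi>') = Suc (card (dom \<chi>))" using eN by (simp add: \<chi>'_def)
        show ?thesis
          apply (rule exI[of _ \<phi>])
          using ph cc bd r d cd B0 by (auto simp: algebra_simps)
      next
        case False
        define D where "D = dom \<chi> \<union> dom \<psi>"
        define \<psi>c where "\<psi>c = res \<phi>0 D"
        have pc: "prob_cons p \<psi>c > 0" using pos_iff Suc.prems unfolding \<psi>c_def by auto
        have eD: "e \<notin> dom \<psi>c" using eN False by (simp add: \<psi>c_def D_def)
        have le: "\<psi> \<subseteq>\<^sub>m \<psi>c" using Suc.prems(3)
          unfolding map_le_def \<psi>c_def res_def D_def consistent_def by auto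
        have pp: "prob_cons p \<psi> > 0" using pos_iff Suc.prems by auto
        have sm: "fwc_marg f p e \<psi>c \<le> fwc_marg f p e \<psi>"
          using submod pc pp le eD unfolding wc_submodular_def by blast
        obtain \<phi>1 where p1: "p \<phi>1 > 0" "consistent \<phi>1 \<psi>c"
          and m1: "fwc_marg f p e \<psi>c = f (insert e D) \<phi>1 - f D \<phi>1"
          using marg_attain[OF pc eD] unfolding \<psi>c_def by auto
        have fD: "f D \<phi>1 = f D \<phi>0"
          using cond_eq[of \<phi>1 \<psi>c] cond_eq[of \<phi>0 \<psi>c] p1 Suc.prems(1)
          unfolding \<psi>c_def by simp
        have agree: "\<forall>a\<in>D. \<phi>1 a = \<phi>0 a"
        proof
          fix a assume "a \<in> D"
          hence "a \<in> dom \<psi>c" by (simp add: \<psi>c_def)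
          hence "\<psi>c a = Some (\<phi>1 a)" using p1(2) unfolding consistent_def by blast
          thus "\<phi>1 a = \<phi>0 a" using \<open>a \<in> D\<close> by (simp add: \<psi>c_def res_def)
        qed
        have c1: "consistent \<phi>1 \<chi>" using agree Suc.prems(2)
          unfolding consistent_def D_def by auto
        have c1p: "consistent \<phi>1 \<psi>" using agree Suc.prems(3)
          unfolding consistent_def D_def by auto
        define \<chi>' where "\<chi>' = \<chi>(e \<mapsto> \<phi>1 e)"
        have c': "consistent \<phi>1 \<chi>'" unfolding \<chi>'_def by (rule cons_upd[OF c1])
        obtain \<phi> where ph: "p \<phi> > 0" "consistent \<phi> \<chi>'" "consistent \<phi> \<psi>"
          and bd: "f (dom (run \<pi> \<phi> m \<chi>')) \<phi> \<le> f (dom \<chi>' \<union> dom \<psi>) \<phi>1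
            + (real (card (dom (run \<pi> \<phi> m \<chi>'))) - real (card (dom \<chi>'))) * B"
          using Suc.IH[OF p1(1) c' c1p] by (elim exE conjE) (rule that)
        have cc: "consistent \<phi> \<chi> \<and> \<phi> e = \<phi>1 e" using cons_upd_D[of \<phi> \<chi> e] ph(2) eN unfolding \<chi>'_def by blast
        have r: "run \<pi> \<phi> (Suc m) \<chi> = run \<pi> \<phi> m \<chi>'" using Some eN cc by (simp add: \<chi>'_def)
        have d: "dom \<chi>' \<union> dom \<psi> = insert e D" by (auto simp: \<chi>'_def D_def)
        have cd: "card (dom \<chi>') = Suc (card (dom \<chi>))" using eN by (simp add: \<chi>'_def)
        have "fwc_marg f p e \<psi> \<le> B" using Bb False by blast
        hence "f (insert e D) \<phi>1 \<le> f D \<phi>0 + B" using sm m1 fD by linarith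
        show ?thesis
          apply (rule exI[of _ \<phi>])
          using ph cc bd r d cd B0 \<open>f (insert e D) \<phi>1 \<le> f D \<phi>0 + B\<close>
          by (auto simp: algebra_simps D_def)
      qed
    qed
  qed
qed

lemma opt_bound:
  assumes B0: "B \<ge> 0" and Bb: "\<forall>e. e \<notin> dom \<psi> \<longrightarrow> fwc_marg f p e \<psi> \<le> B"
    and ph0: "p \<phi>0 > 0" "consistent \<phi>0 \<psi>"
    and card: "\<forall>\<phi>. p \<phi> > 0 \<longrightarrow> card (selected \<pi> \<phi>) \<le> k"
  shows "fwc_policy f p \<pi> \<le> f (dom \<psi>) \<phi>0 + real k * B"
proof -
  obtain \<phi> where ph: "p \<phi> > 0"
    and bd: "f (selected \<pi> \<phi>) \<phi> \<le> f (dom \<psi>) \<phi>0 + real (card (selected \<pi> \<phi>)) * B"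
    using adv[OF B0 Bb ph0(1) _ ph0(2), of Map.empty \<pi> "card (UNIV::'e set)"]
    unfolding selected_def consistent_def by auto
  have "fwc_policy f p \<pi> \<le> f (selected \<pi> \<phi>) \<phi>"
    unfolding fwc_policy_def using ph by (intro Min_le) auto
  also have "\<dots> \<le> f (dom \<psi>) \<phi>0 + real k * B"
    using bd card ph B0 by (smt (verit) mult_right_mono of_nat_le_iff)
  finally show ?thesis .
qed

end


lemma q_bound:
  assumes "0 < k"
  shows "(1 - 1 / real k) ^ k \<le> 1 / exp 1" "0 \<le> (1 - 1 / real k) ^ k"
proof -
  have k1: "1 / real k \<le> 1" using assms by simp
  have a: "1 - 1 / real k \<le> exp (- (1 / real k))" using exp_ge_add_one_self[of "- (1 / real k)"] by simp
  have "(1 - 1 / real k) ^ k \<le> exp (- (1 / real k)) ^ k"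
    using a k1 by (intro power_mono) auto
  also have "\<dots> = exp (real k * (- (1 / real k)))" by (rule exp_of_nat_mult[symmetric])
  also have "real k * (- (1 / real k)) = -1" using assms by simp
  also have "exp (-1) = 1 / exp (1::real)" by (simp add: exp_minus inverse_eq_divide)
  finally show "(1 - 1 / real k) ^ k \<le> 1 / exp 1" .
  show "0 \<le> (1 - 1 / real k) ^ k" using k1 by simp
qed

theorem theorem2:
  fixes p :: "('e::finite \<Rightarrow> 'o::finite) \<Rightarrow> real"
    and f :: "'e set \<Rightarrow> ('e \<Rightarrow> 'o) \<Rightarrow> real"
    and k :: nat
    and \<pi>g :: "('e, 'o) policy"
  assumes p_nonneg: "\<forall>\<phi>. p \<phi> \<ge> 0"
    and p_sum: "sum p UNIV = 1"
    and k_pos: "0 < k"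
    and k_le: "k \<le> card (UNIV :: 'e set)"
    and f_nonneg: "\<forall>S \<phi>. f S \<phi> \<ge> 0"
    and mono: "wc_monotone f p"
    and submod: "wc_submodular f p"
    and mindep: "minimal_dependency f p"
    and greedy: "is_wc_greedy f p k \<pi>g"
  shows "\<forall>\<pi>. (\<forall>\<phi>. p \<phi> > 0 \<longrightarrow> card (selected \<pi> \<phi>) \<le> k) \<longrightarrow>
           fwc_policy f p \<pi>g \<ge> (1 - 1 / exp 1) * fwc_policy f p \<pi>"
proof (intro allI impI)
  fix \<pi> :: "('e, 'o) policy"
  assume card: "\<forall>\<phi>. p \<phi> > 0 \<longrightarrow> card (selected \<pi> \<phi>) \<le> k"
  note pos_iff' = pos_iff[OF p_nonneg mono submod mindep]
  note marg_le' = marg_le[OF p_nonneg mono submod mindep]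
  note marg_nonneg' = marg_nonneg[OF p_nonneg mono submod mindep]
  note opt_bound' = opt_bound[OF p_nonneg mono submod mindep]
  define OPT where "OPT = fwc_policy f p \<pi>"
  have fin: "finite ((\<lambda>\<phi>. f (selected \<pi>g \<phi>) \<phi>) ` {\<phi>. p \<phi> > 0})" by simp
  have ne: "{\<phi>. p \<phi> > 0} \<noteq> {}"
  proof
    assume "{\<phi>. p \<phi> > 0} = {}"
    hence "\<forall>\<phi>\<in>UNIV. p \<phi> \<le> 0" by (auto simp: not_less)
    hence "sum p UNIV \<le> 0" by (intro sum_nonpos) blast
    with p_sum show False by simp
  qed
  have OPT0: "OPT \<ge> 0" unfolding OPT_def fwc_policy_def
    using ne f_nonneg by (subst Min_ge_iff) auto
  have key: "f (selected \<pi>g \<phi>) \<phi> \<ge> (1 - 1 / exp 1) * OPT" if ph: "p \<phi> > 0" for \<phi>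
  proof -
    define \<psi> where "\<psi> t = run \<pi>g \<phi> t Map.empty" for t
    have \<psi>S: "\<psi> (Suc t) = step \<pi>g \<phi> (\<psi> t)" for t unfolding \<psi>_def by (rule run_Suc_back)
    have cl: "t \<le> k \<longrightarrow> consistent \<phi> (\<psi> t) \<and> card (dom (\<psi> t)) = t \<and>
        OPT - f (dom (\<psi> t)) \<phi> \<le> (1 - 1 / real k) ^ t * (OPT - f {} \<phi>)" for t
    proof (induction t)
      case 0
      then show ?case by (simp add: \<psi>_def consistent_def)
    next
      case (Suc t)
      show ?case
      proof
        assume st: "Suc t \<le> k"
        with Suc.IH have c: "consistent \<phi> (\<psi> t)" and cd: "card (dom (\<psi> t)) = t"
          and ih: "OPT - f (dom (\<psi> t)) \<phi> \<le> (1 - 1 / real k) ^ t * (OPT - f {} \<phi>)" by auto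
        have pp: "prob_cons p (\<psi> t) > 0" using pos_iff' c ph by blast
        have "card (dom (\<psi> t)) < k" using cd st by simp
        then obtain e where e: "\<pi>g (\<psi> t) = Some e" "e \<notin> dom (\<psi> t)"
          and mx: "\<forall>e'. e' \<notin> dom (\<psi> t) \<longrightarrow> fwc_marg f p e' (\<psi> t) \<le> fwc_marg f p e (\<psi> t)"
          using greedy pp unfolding is_wc_greedy_def by (meson)
        have nx: "\<psi> (Suc t) = (\<psi> t)(e \<mapsto> \<phi> e)" using \<psi>S e by (simp add: step_def)
        define B where "B = fwc_marg f p e (\<psi> t)"
        have B0: "B \<ge> 0" unfolding B_def using marg_nonneg' ph c e(2) by blast
        have ob: "OPT \<le> f (dom (\<psi> t)) \<phi> + real k * B"
          unfolding OPT_def using opt_bound'[OF B0 _ ph c card] mx unfolding B_def by blast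
        have inc: "f (dom (\<psi> (Suc t))) \<phi> \<ge> f (dom (\<psi> t)) \<phi> + B"
          using marg_le'[OF ph c e(2)] nx unfolding B_def by simp
        define a where "a = OPT - f (dom (\<psi> t)) \<phi>"
        have kB: "a / real k \<le> B" using ob k_pos unfolding a_def
          by (simp add: divide_le_eq mult.commute)
        have "OPT - f (dom (\<psi> (Suc t))) \<phi> \<le> a - a / real k" using inc kB unfolding a_def by linarith
        also have "\<dots> = (1 - 1 / real k) * a" by (simp add: algebra_simps)
        also have "\<dots> \<le> (1 - 1 / real k) * ((1 - 1 / real k) ^ t * (OPT - f {} \<phi>))"
          using ih k_pos unfolding a_def by (intro mult_left_mono) auto
        finally have "OPT - f (dom (\<psi> (Suc t))) \<phi> \<le> (1 - 1 / real k) ^ Suc t * (OPT - f {} \<phi>)"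
          by simp
        moreover have "consistent \<phi> (\<psi> (Suc t))" using nx cons_upd[OF c] by simp
        moreover have "card (dom (\<psi> (Suc t))) = Suc t" using nx e(2) cd by simp
        ultimately show "consistent \<phi> (\<psi> (Suc t)) \<and> card (dom (\<psi> (Suc t))) = Suc t \<and>
          OPT - f (dom (\<psi> (Suc t))) \<phi> \<le> (1 - 1 / real k) ^ Suc t * (OPT - f {} \<phi>)" by blast
      qed
    qed
    have ck: "consistent \<phi> (\<psi> k)" "card (dom (\<psi> k)) = k"
      and bk: "OPT - f (dom (\<psi> k)) \<phi> \<le> (1 - 1 / real k) ^ k * (OPT - f {} \<phi>)" using cl[of k] by auto
    have none: "\<pi>g (\<psi> k) = None"
    proof -
      have "prob_cons p (\<psi> k) > 0" using pos_iff' ck ph by blast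
      thus ?thesis using greedy ck(2) unfolding is_wc_greedy_def by auto
    qed
    have stab: "\<psi> (k + d) = \<psi> k" for d
      by (induction d) (auto simp: \<psi>S step_def none)
    have sel: "selected \<pi>g \<phi> = dom (\<psi> k)"
      using stab[of "card (UNIV::'e set) - k"] k_le unfolding selected_def \<psi>_def by simp
    define q where "q = (1 - 1 / real k) ^ k"
    have q: "q \<le> 1 / exp 1" "0 \<le> q" using q_bound[OF k_pos] unfolding q_def by auto
    have a0: "OPT - f {} \<phi> \<le> OPT" using f_nonneg by simp
    have "q * (OPT - f {} \<phi>) \<le> OPT / exp 1"
    proof (cases "OPT - f {} \<phi> \<ge> 0")
      case True
      have "q * (OPT - f {} \<phi>) \<le> q * OPT" using a0 q by (intro mult_left_mono) auto
      also have "\<dots> \<le> (1 / exp 1) * OPT" using q OPT0 by (intro mult_right_mono) auto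
      finally show ?thesis by simp
    next
      case False
      hence "q * (OPT - f {} \<phi>) \<le> 0" using q by (simp add: mult_nonneg_nonpos)
      also have "0 \<le> OPT / exp 1" using OPT0 by simp
      finally show ?thesis .
    qed
    then show ?thesis using bk sel unfolding q_def by (simp add: algebra_simps)
  qed
  show "fwc_policy f p \<pi>g \<ge> (1 - 1 / exp 1) * fwc_policy f p \<pi>"
    unfolding OPT_def[symmetric] unfolding fwc_policy_def using ne key
    by (subst Min_ge_iff) auto
qed

end
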